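(* Let $g\geq 1$ and $n\geq 1$ be integers. Let the Heisenberg group $H_g$ act on the polynomial ring $\mathbf{C}[\ldots,X_\sigma,\ldots]$ in the $2^g$ variables $X_\sigma$, $\sigma\in\mathbf{F}_2^g$, as described in the context. Then the dimension of the space of $H_g$-invariant homogeneous polynomials of degree $4n$ is $$\dim\big(\mathbf{C}[\ldots,X_\sigma,\ldots]_{4n}\big)^{H_g}=2^{-2g}\left(\binom{2^g+4n-1}{4n}+(2^{2g}-1)\binom{2^{g-1}+2n-1}{2n}\right).$$
   Context: $\mu_4=\{z\in\mathbf{C}: z^4=1\}$. The Heisenberg group is $H_g=\mu_4\times\mathbf{F}_2^g\times\mathbf{F}_2^g$ with multiplication $(s,x,u)(t,y,v)=(st(-1)^{u\cdot y},x+y,u+v)$, where $u\cdot y=\sum_i u_iy_i$. It acts on the variables $X_\sigma$ ($\sigma\in\mathbf{F}_2^g$) by $(s,x,u)X_\sigma=s(-1)^{(x+\sigma)\cdot u}X_{x+\sigma}$, and this action is extended to polynomials as ring automorphisms. $\mathbf{C}[\ldots,X_\sigma,\ldots]_{d}$ denotes the space of homogeneous polynomials of degree $d$. *)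

theory Defs
  imports "HOL-Analysis.Analysis" "HOL-Library.Function_Algebras"
begin

definition F2vec :: "nat \<Rightarrow> bool list set" where
  "F2vec g = {xs. length xs = g}"

definition vadd :: "bool list \<Rightarrow> bool list \<Rightarrow> bool list" where
  "vadd x y = map2 (\<lambda>a b. a \<noteq> b) x y"

text \<open>Integer-valued dot product; only its parity matters, via (-1)^dot.\<close>
definition vdot :: "bool list \<Rightarrow> bool list \<Rightarrow> nat" where
  "vdot u y = length (filter id (map2 (\<and>) u y))"

definition mu4 :: "complex set" where
  "mu4 = {z. z ^ 4 = 1}"

definition Heis :: "nat \<Rightarrow> (complex \<times> bool list \<times> bool list) set" where
  "Heis g = {(s, x, u). s \<in> mu4 \<and> x \<in> F2vec g \<and> u \<in> F2vec g}"

definition heis_mult ::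
  "complex \<times> bool list \<times> bool list \<Rightarrow> complex \<times> bool list \<times> bool list \<Rightarrow> complex \<times> bool list \<times> bool list" where
  "heis_mult a b = (case a of (s, x, u) \<Rightarrow> case b of (t, y, v) \<Rightarrow>
      (s * t * (-1) ^ vdot u y, vadd x y, vadd u v))"

text \<open>Monomials in the variables X_sigma (sigma in F_2^g) are exponent functions
  supported on F_2^g; those of total degree d.\<close>
definition Mon :: "nat \<Rightarrow> nat \<Rightarrow> (bool list \<Rightarrow> nat) set" where
  "Mon g d = {e. (\<forall>\<sigma>. \<sigma> \<notin> F2vec g \<longrightarrow> e \<sigma> = 0) \<and> (\<Sum>\<sigma>\<in>F2vec g. e \<sigma>) = d}"

definition HPoly :: "nat \<Rightarrow> nat \<Rightarrow> ((bool list \<Rightarrow> nat) \<Rightarrow> complex) set" where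
  "HPoly g d = {p. \<forall>e. e \<notin> Mon g d \<longrightarrow> p e = 0}"

definition var_coeff :: "complex \<times> bool list \<times> bool list \<Rightarrow> bool list \<Rightarrow> complex" where
  "var_coeff h \<sigma> = (case h of (s, x, u) \<Rightarrow> s * (-1) ^ vdot (vadd x \<sigma>) u)"

definition var_img :: "complex \<times> bool list \<times> bool list \<Rightarrow> bool list \<Rightarrow> bool list" where
  "var_img h \<sigma> = (case h of (s, x, u) \<Rightarrow> vadd x \<sigma>)"

text \<open>Extension to monomials as a ring automorphism:
  h (prod X_sigma^(e sigma)) = prod (c_sigma X_(img sigma))^(e sigma)
  = (prod c_sigma^(e sigma)) * X^(e'), returned as (coefficient, exponent e').\<close>
definition mono_act :: "nat \<Rightarrow> complex \<times> bool list \<times> bool list \<Rightarrow> (bool list \<Rightarrow> nat)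
    \<Rightarrow> complex \<times> (bool list \<Rightarrow> nat)" where
  "mono_act g h e =
     ((\<Prod>\<sigma>\<in>F2vec g. var_coeff h \<sigma> ^ e \<sigma>),
      (\<lambda>\<tau>. \<Sum>\<sigma>\<in>{\<sigma>\<in>F2vec g. var_img h \<sigma> = \<tau>}. e \<sigma>))"

definition poly_act :: "nat \<Rightarrow> nat \<Rightarrow> complex \<times> bool list \<times> bool list
    \<Rightarrow> ((bool list \<Rightarrow> nat) \<Rightarrow> complex) \<Rightarrow> ((bool list \<Rightarrow> nat) \<Rightarrow> complex)" where
  "poly_act g d h p = (\<lambda>f. \<Sum>e\<in>Mon g d.
       if snd (mono_act g h e) = f then fst (mono_act g h e) * p e else 0)"

definition Invariants :: "nat \<Rightarrow> nat \<Rightarrow> ((bool list \<Rightarrow> nat) \<Rightarrow> complex) set" where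
  "Invariants g d = {p \<in> HPoly g d. \<forall>h\<in>Heis g. poly_act g d h p = p}"

definition fscale :: "complex \<Rightarrow> ('a \<Rightarrow> complex) \<Rightarrow> ('a \<Rightarrow> complex)" where
  "fscale c f = (\<lambda>m. c * f m)"

lemma fscale_vector_space: "Vector_Spaces.vector_space (fscale :: complex \<Rightarrow> ('a \<Rightarrow> complex) \<Rightarrow> _)"
  by unfold_locales (auto simp: fscale_def fun_eq_iff algebra_simps)

definition cdim :: "('a \<Rightarrow> complex) set \<Rightarrow> nat" where
  "cdim V = vector_space.dim (fscale :: complex \<Rightarrow> ('a \<Rightarrow> complex) \<Rightarrow> _) V"

end

theory Submission
  imports Defs "HOL-Computational_Algebra.Formal_Power_Series"
begin

unbundle no vec_syntax
notation fps_nth (infixl "$" 75)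



definition Fun :: "'a set \<Rightarrow> nat \<Rightarrow> ('a \<Rightarrow> nat) set" where
  "Fun V k = {f. (\<forall>v. v \<notin> V \<longrightarrow> f v = 0) \<and> sum f V = k}"

lemma Fun_finite:
  assumes "finite V" shows "finite (Fun V k)"
proof (rule finite_subset)
  show "Fun V k \<subseteq> {f. \<forall>x. (x \<in> V \<longrightarrow> f x \<in> {..k}) \<and> (x \<notin> V \<longrightarrow> f x = 0)}"
    using assms by (auto simp: Fun_def intro: member_le_sum)
  show "finite {f. \<forall>x. (x \<in> V \<longrightarrow> f x \<in> {..k}) \<and> (x \<notin> V \<longrightarrow> f x = 0)}"
    using assms by (intro finite_set_of_finite_funs) auto
qed

lemma Fun_slice:
  assumes "finite V" "a \<notin> V" "j \<le> k"
  shows "{f \<in> Fun (insert a V) k. f a = j} = (\<lambda>h. h(a:=j)) ` Fun V (k - j)"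
proof (intro equalityI subsetI)
  fix f assume f: "f \<in> {f \<in> Fun (insert a V) k. f a = j}"
  have s: "sum f (insert a V) = f a + sum f V" using assms by simp
  let ?h = "f(a:=0)"
  have "sum ?h V = sum f V" using assms by (intro sum.cong) auto
  hence "?h \<in> Fun V (k - j)" using f s by (auto simp: Fun_def)
  moreover have "f = ?h(a:=j)" using f by auto
  ultimately show "f \<in> (\<lambda>h. h(a:=j)) ` Fun V (k - j)" by blast
next
  fix f assume "f \<in> (\<lambda>h. h(a:=j)) ` Fun V (k - j)"
  then obtain h where h: "h \<in> Fun V (k-j)" and fh: "f = h(a:=j)" by blast
  have "sum f V = sum h V" using assms fh by (intro sum.cong) auto
  hence "sum f (insert a V) = j + (k - j)" using assms fh h by (simp add: Fun_def)
  thus "f \<in> {f \<in> Fun (insert a V) k. f a = j}" using h fh assms by (auto simp: Fun_def)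
qed

lemma Fun_insert_sum:
  assumes "finite V" "a \<notin> V"
  shows "(\<Sum>f\<in>Fun (insert a V) k. \<phi> f) = (\<Sum>j\<le>k. \<Sum>h\<in>Fun V (k-j). \<phi> (h(a:=j)))"
proof -
  have fin: "finite (Fun (insert a V) k)" using assms by (simp add: Fun_finite)
  have sub: "(\<lambda>f. f a) ` Fun (insert a V) k \<subseteq> {..k}"
    using assms by (auto simp: Fun_def intro: member_le_sum)
  have "(\<Sum>f\<in>Fun (insert a V) k. \<phi> f) = (\<Sum>j\<le>k. \<Sum>f\<in>{f \<in> Fun (insert a V) k. f a = j}. \<phi> f)"
    using sum.group[OF fin _ sub, of \<phi>] by simp
  also have "\<dots> = (\<Sum>j\<le>k. \<Sum>h\<in>Fun V (k-j). \<phi> (h(a:=j)))"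
  proof (rule sum.cong[OF refl])
    fix j assume j: "j \<in> {..k}"
    have inj: "inj_on (\<lambda>h. h(a:=j)) (Fun V (k-j))"
    proof (rule inj_onI)
      fix h h' assume "h \<in> Fun V (k-j)" "h' \<in> Fun V (k-j)" "h(a:=j) = h'(a:=j)"
      thus "h = h'" using assms by (auto simp: Fun_def fun_eq_iff) (metis fun_upd_apply)
    qed
    show "(\<Sum>f\<in>{f \<in> Fun (insert a V) k. f a = j}. \<phi> f) = (\<Sum>h\<in>Fun V (k-j). \<phi> (h(a:=j)))"
      using j by (simp add: Fun_slice[OF assms] sum.reindex[OF inj])
  qed
  finally show ?thesis .
qed

definition geo :: "'b::comm_ring_1 \<Rightarrow> 'b fps" where
  "geo a = Abs_fps (\<lambda>n. a ^ n)"

lemma GF: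
  fixes w :: "'a \<Rightarrow> 'b::comm_ring_1"
  assumes "finite V"
  shows "(\<Sum>f\<in>Fun V k. \<Prod>v\<in>V. w v ^ f v) = (\<Prod>v\<in>V. geo (w v)) $ k"
  using assms
proof (induction V arbitrary: k rule: finite_induct)
  case empty
  have e: "Fun ({}::'a set) k = (if k = 0 then {\<lambda>_. 0} else {})" by (auto simp: Fun_def)
  show ?case unfolding e by simp
next
  case (insert a V)
  have "(\<Sum>f\<in>Fun (insert a V) k. \<Prod>v\<in>insert a V. w v ^ f v)
      = (\<Sum>j\<le>k. \<Sum>h\<in>Fun V (k-j). \<Prod>v\<in>insert a V. w v ^ (h(a:=j)) v)"
    using insert by (simp add: Fun_insert_sum)
  also have "\<dots> = (\<Sum>j\<le>k. w a ^ j * (\<Sum>h\<in>Fun V (k-j). \<Prod>v\<in>V. w v ^ h v))"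
  proof (rule sum.cong[OF refl])
    fix j
    have "\<And>h. (\<Prod>v\<in>insert a V. w v ^ (h(a:=j)) v) = w a ^ j * (\<Prod>v\<in>V. w v ^ h v)"
    proof -
      fix h
      have "(\<Prod>v\<in>V. w v ^ (h(a:=j)) v) = (\<Prod>v\<in>V. w v ^ h v)"
        using insert by (intro prod.cong) auto
      thus "(\<Prod>v\<in>insert a V. w v ^ (h(a:=j)) v) = w a ^ j * (\<Prod>v\<in>V. w v ^ h v)"
        using insert by simp
    qed
    thus "(\<Sum>h\<in>Fun V (k-j). \<Prod>v\<in>insert a V. w v ^ (h(a:=j)) v) = w a ^ j * (\<Sum>h\<in>Fun V (k-j). \<Prod>v\<in>V. w v ^ h v)"
      by (simp add: sum_distrib_left)
  qed
  also have "\<dots> = (\<Sum>j\<le>k. geo (w a) $ j * (\<Prod>v\<in>V. geo (w v)) $ (k-j))"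
    using insert by (simp add: geo_def)
  also have "\<dots> = (\<Prod>v\<in>insert a V. geo (w v)) $ k"
    using insert by (simp add: fps_mult_nth atLeast0AtMost)
  finally show ?case .
qed

lemma geo1_pow_Suc:
  "(geo (1::'b::comm_ring_1) ^ Suc m) $ k = of_nat ((m + k) choose k)"
proof (induction m arbitrary: k)
  case 0
  then show ?case by (simp add: geo_def)
next
  case (Suc m)
  have "(geo (1::'b) ^ Suc (Suc m)) $ k = (\<Sum>i=0..k. geo 1 $ i * (geo 1 ^ Suc m) $ (k - i))"
    by (simp add: fps_mult_nth)
  also have "\<dots> = (\<Sum>i\<le>k. of_nat ((m + (k - i)) choose (k - i)))"
    using Suc by (simp add: geo_def atLeast0AtMost)
  also have "\<dots> = (\<Sum>i\<le>k. of_nat ((m + i) choose i))"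
    by (rule sum.reindex_bij_witness[of _ "\<lambda>i. k - i" "\<lambda>i. k - i"]) auto
  also have "\<dots> = of_nat (\<Sum>i\<le>k. (m + i) choose i)"
    by simp
  also have "\<dots> = of_nat (Suc m + k choose k)"
    by (simp add: sum_choose_lower)
  finally show ?case .
qed

lemma geo1_pow:
  assumes "m \<ge> 1"
  shows "(geo (1::'b::comm_ring_1) ^ m) $ k = of_nat ((m + k - 1) choose k)"
  using geo1_pow_Suc[of "m - 1" k] assms by simp


lemma alt_sum: "(\<Sum>i=0..n. (-1::int) ^ i) = (if even n then 1 else 0)"
  by (induction n) auto

lemma geo_pm: "(geo (1::int) * geo (-1)) $ n = (if even n then 1 else 0)"
proof -
  have "(geo (1::int) * geo (-1)) $ n = (\<Sum>i=0..n. (-1::int) ^ (n - i))"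
    by (simp add: fps_mult_nth geo_def)
  also have "\<dots> = (\<Sum>i=0..n. (-1::int) ^ i)"
    by (rule sum.reindex_bij_witness[of _ "\<lambda>i. n - i" "\<lambda>i. n - i"]) auto
  finally show ?thesis by (simp add: alt_sum)
qed

lemma compose_X2_nth:
  "(f oo fps_X ^ 2) $ n = (if even n then f $ (n div 2) else (0::int))"
proof -
  have "(f oo fps_X ^ 2) $ n = (\<Sum>i\<in>{0..n}. if i = n div 2 \<and> even n then f $ i else 0)"
    unfolding fps_compose_nth power_mult[symmetric]
    by (intro sum.cong) (auto simp: mult.commute)
  also have "\<dots> = (if even n then f $ (n div 2) else 0)"
    by (cases "even n") (simp_all add: sum.delta)
  finally show ?thesis .
qed

lemma geo_pm_compose: "geo (1::int) * geo (-1) = geo 1 oo fps_X ^ 2"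
  by (rule fps_ext) (simp only: geo_pm compose_X2_nth, simp add: geo_def)

lemma EP:
  assumes "m \<ge> 1"
  shows "((geo (1::int) * geo (-1)) ^ m) $ (2 * k) = of_nat ((m + k - 1) choose k)"
proof -
  have "(geo (1::int) * geo (-1)) ^ m = geo 1 ^ m oo fps_X ^ 2"
    unfolding geo_pm_compose by (rule fps_compose_power) simp
  thus ?thesis using assms by (simp add: compose_X2_nth geo1_pow)
qed


abbreviation zv :: "nat \<Rightarrow> bool list" where "zv g \<equiv> replicate g False"

lemma finite_F2: "finite (F2vec g)"
  using finite_lists_length_eq[of "UNIV::bool set" g] by (simp add: F2vec_def)

lemma card_F2: "card (F2vec g) = 2 ^ g"
  using card_lists_length_eq[of "UNIV::bool set" g] by (simp add: F2vec_def)

lemma length_vadd[simp]: "length (vadd x y) = min (length x) (length y)"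
  by (simp add: vadd_def)

lemma vadd_Cons[simp]: "vadd (a # x) (b # y) = (a \<noteq> b) # vadd x y"
  by (simp add: vadd_def)
lemma vadd_Nil[simp]: "vadd [] y = []" "vadd x [] = []"
  by (simp_all add: vadd_def)

lemma vadd_comm: "vadd x y = vadd y x"
proof (induction x arbitrary: y)
  case Nil then show ?case by simp
next
  case (Cons a x) then show ?case by (cases y) auto
qed

lemma vadd_assoc: "vadd x (vadd y z) = vadd (vadd x y) z"
proof (induction x arbitrary: y z)
  case Nil then show ?case by simp
next
  case (Cons a x)
  then show ?case by (cases y; cases z) auto
qed

lemma vadd_zero: "vadd (zv (length x)) x = x"
  by (induction x) auto

lemma vadd_self: "vadd x x = zv (length x)"
  by (induction x) auto

lemma vadd_cancel: "length x = length y \<Longrightarrow> vadd x (vadd x y) = y"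
  by (metis vadd_assoc vadd_self vadd_zero)

lemma vdot_Cons[simp]: "vdot (a # x) (b # y) = (if a \<and> b then 1 else 0) + vdot x y"
  by (simp add: vdot_def)
lemma vdot_Nil[simp]: "vdot [] y = 0" "vdot x [] = 0"
  by (simp_all add: vdot_def)

lemma vdot_comm: "vdot x y = vdot y x"
proof (induction x arbitrary: y)
  case Nil then show ?case by simp
next
  case (Cons a x) then show ?case by (cases y) auto
qed

lemma vdot_zero1[simp]: "vdot (zv n) u = 0"
proof (induction n arbitrary: u)
  case 0 then show ?case by simp
next
  case (Suc n) then show ?case by (cases u) auto
qed

lemma vdot_zero2[simp]: "vdot u (zv n) = 0"
  by (subst vdot_comm) simp

lemma even_vdot_vadd:
  assumes "length a = length b" "length b = length u"
  shows "even (vdot (vadd a b) u) \<longleftrightarrow> (even (vdot a u) \<longleftrightarrow> even (vdot b u))"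
  using assms by (induction a b u rule: list_induct3) auto

lemma sg_vadd:
  assumes "length a = length b" "length b = length u"
  shows "(-1::'b::ring_1) ^ vdot (vadd a b) u = (-1) ^ vdot a u * (-1) ^ vdot b u"
  using even_vdot_vadd[OF assms]
  by (cases "even (vdot a u)"; cases "even (vdot b u)") (simp_all add: minus_one_power_iff)

lemma exists_odd:
  "length x = g \<Longrightarrow> x \<noteq> zv g \<Longrightarrow> \<exists>u. length u = g \<and> odd (vdot x u)"
proof (induction g arbitrary: x)
  case 0 then show ?case by simp
next
  case (Suc g)
  then obtain a xs where x: "x = a # xs" and l: "length xs = g" by (cases x) auto
  show ?case
  proof (cases "xs = zv g")
    case True
    then have "a" using Suc x by auto
    then show ?thesis using x True l by (intro exI[of _ "True # zv g"]) auto
  next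
    case False
    then obtain u where "length u = g" "odd (vdot xs u)" using Suc.IH l by blast
    then show ?thesis using x by (intro exI[of _ "False # u"]) auto
  qed
qed

lemma half_card:
  assumes u: "u \<in> F2vec g" and y: "y \<in> F2vec g" and odd: "odd (vdot y u)" and g: "g \<ge> 1"
  shows "card {t\<in>F2vec g. even (vdot t u)} = 2 ^ (g - 1)"
    and "card {t\<in>F2vec g. odd (vdot t u)} = 2 ^ (g - 1)"
proof -
  let ?E = "{t\<in>F2vec g. even (vdot t u)}" and ?O = "{t\<in>F2vec g. odd (vdot t u)}"
  have bij: "bij_betw (vadd y) ?E ?O"
  proof (rule bij_betw_byWitness[where f'="vadd y"])
    show "\<forall>a\<in>?E. vadd y (vadd y a) = a" "\<forall>a\<in>?O. vadd y (vadd y a) = a"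
      using y by (auto simp: F2vec_def vadd_cancel)
    show "vadd y ` ?E \<subseteq> ?O" "vadd y ` ?O \<subseteq> ?E"
      using u y odd by (auto simp: F2vec_def even_vdot_vadd)
  qed
  have ce: "card ?E = card ?O" using bij_betw_same_card[OF bij] .
  have "F2vec g = ?E \<union> ?O" by auto
  moreover have "card (?E \<union> ?O) = card ?E + card ?O"
    by (rule card_Un_disjoint) (use finite_F2[of g] in auto)
  ultimately have "card ?E + card ?O = 2 ^ g" using card_F2[of g] by simp
  moreover have "(2::nat) ^ g = 2 * 2 ^ (g - 1)" using g by (cases g) auto
  ultimately show "card ?E = 2 ^ (g - 1)" "card ?O = 2 ^ (g - 1)" using ce by auto
qed


lemma Mon_eq: "Mon g d = Fun (F2vec g) d"
  by (simp add: Mon_def Fun_def)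

lemma bij_vadd: "x \<in> F2vec g \<Longrightarrow> bij_betw (vadd x) (F2vec g) (F2vec g)"
  by (rule bij_betw_byWitness[where f'="vadd x"]) (auto simp: F2vec_def vadd_cancel)

lemma prod_vadd: "x \<in> F2vec g \<Longrightarrow> (\<Prod>t\<in>F2vec g. \<phi> (vadd x t)) = (\<Prod>t\<in>F2vec g. \<phi> t)"
  using prod.reindex_bij_betw[OF bij_vadd] by blast

lemma sum_vadd: "x \<in> F2vec g \<Longrightarrow> (\<Sum>t\<in>F2vec g. \<phi> (vadd x t)) = (\<Sum>t\<in>F2vec g. \<phi> t)"
  using sum.reindex_bij_betw[OF bij_vadd] by blast

definition sh :: "nat \<Rightarrow> bool list \<Rightarrow> (bool list \<Rightarrow> nat) \<Rightarrow> (bool list \<Rightarrow> nat)" where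
  "sh g x f = (\<lambda>t. if t \<in> F2vec g then f (vadd x t) else 0)"

definition chi :: "nat \<Rightarrow> (bool list \<Rightarrow> nat) \<Rightarrow> bool list \<Rightarrow> int" where
  "chi g f u = (\<Prod>t\<in>F2vec g. ((-1) ^ vdot t u) ^ f t)"

lemma sh_Fun: "x \<in> F2vec g \<Longrightarrow> f \<in> Fun (F2vec g) d \<Longrightarrow> sh g x f \<in> Fun (F2vec g) d"
proof -
  assume x: "x \<in> F2vec g" and f: "f \<in> Fun (F2vec g) d"
  have "sum (sh g x f) (F2vec g) = (\<Sum>t\<in>F2vec g. f (vadd x t))"
    by (simp add: sh_def)
  also have "\<dots> = sum f (F2vec g)" using sum_vadd[OF x] .
  finally show ?thesis using f by (auto simp: Fun_def sh_def)
qed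

lemma vadd_F2: "x \<in> F2vec g \<Longrightarrow> y \<in> F2vec g \<Longrightarrow> vadd x y \<in> F2vec g"
  by (simp add: F2vec_def)

lemma sh_sh:
  assumes "x \<in> F2vec g" "y \<in> F2vec g"
  shows "sh g x (sh g y f) = sh g (vadd y x) f"
  using assms by (auto simp: sh_def fun_eq_iff vadd_F2 vadd_assoc)

lemma sh_zero:
  assumes "\<forall>t. t \<notin> F2vec g \<longrightarrow> f t = 0"
  shows "sh g (zv g) f = f"
  using assms by (auto simp: sh_def fun_eq_iff F2vec_def) (metis vadd_zero)

lemma sh_inv:
  assumes "x \<in> F2vec g" "\<forall>t. t \<notin> F2vec g \<longrightarrow> f t = 0"
  shows "sh g x (sh g x f) = f"
  using assms by (simp add: sh_sh vadd_self sh_zero F2vec_def)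

lemma chi_pm: "chi g f u = 1 \<or> chi g f u = -1"
proof -
  have "\<And>S. finite S \<Longrightarrow> (\<Prod>t\<in>S. ((-1::int) ^ vdot t u) ^ f t) \<in> {1, -1}"
  proof -
    fix S :: "bool list set" assume "finite S"
    thus "(\<Prod>t\<in>S. ((-1::int) ^ vdot t u) ^ f t) \<in> {1, -1}"
      by (induction S rule: finite_induct)
        (auto simp: power_mult[symmetric] minus_one_power_iff)
  qed
  thus ?thesis using finite_F2 by (auto simp: chi_def)
qed

lemma chi_zero: "chi g f (zv n) = 1"
  by (simp add: chi_def)

lemma chi_hom:
  assumes "u \<in> F2vec g" "v \<in> F2vec g"
  shows "chi g f (vadd u v) = chi g f u * chi g f v"
proof -
  have "\<And>t. t \<in> F2vec g \<Longrightarrow> ((-1::int) ^ vdot t (vadd u v)) = (-1) ^ vdot t u * (-1) ^ vdot t v"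
    using assms by (simp add: vdot_comm[of _ "vadd u v"] vdot_comm[of _ u] vdot_comm[of _ v]
        sg_vadd F2vec_def)
  thus ?thesis by (simp add: chi_def power_mult_distrib prod.distrib)
qed

lemma chi_sh:
  assumes x: "x \<in> F2vec g" and u: "u \<in> F2vec g" and f: "f \<in> Fun (F2vec g) d"
  shows "chi g (sh g x f) u = ((-1) ^ vdot x u) ^ d * chi g f u"
proof -
  have "chi g (sh g x f) u = (\<Prod>t\<in>F2vec g. ((-1::int) ^ vdot t u) ^ f (vadd x t))"
    by (simp add: chi_def sh_def)
  also have "\<dots> = (\<Prod>t\<in>F2vec g. ((-1::int) ^ vdot (vadd x (vadd x t)) u) ^ f (vadd x t))"
    using x by (intro prod.cong) (auto simp: F2vec_def vadd_cancel)
  also have "\<dots> = (\<Prod>t\<in>F2vec g. ((-1::int) ^ vdot (vadd x t) u) ^ f t)"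
    using prod_vadd[OF x, of "\<lambda>t. ((-1::int) ^ vdot (vadd x t) u) ^ f t"] by simp
  also have "\<dots> = (\<Prod>t\<in>F2vec g. ((-1::int) ^ vdot x u) ^ f t * ((-1) ^ vdot t u) ^ f t)"
    using x u by (intro prod.cong) (auto simp: F2vec_def sg_vadd power_mult_distrib)
  also have "\<dots> = ((-1) ^ vdot x u) ^ (sum f (F2vec g)) * chi g f u"
    by (simp add: prod.distrib chi_def power_sum)
  finally show ?thesis using f by (simp add: Fun_def)
qed


lemma mono_act_snd:
  assumes x: "x \<in> F2vec g"
  shows "snd (mono_act g (s, x, u) e) = sh g x e"
proof -
  have "\<And>t. {\<sigma> \<in> F2vec g. vadd x \<sigma> = t} = (if t \<in> F2vec g then {vadd x t} else {})"
    using x by (auto simp: F2vec_def vadd_cancel)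
  thus ?thesis by (simp add: mono_act_def var_img_def sh_def fun_eq_iff)
qed

lemma mono_act_fst:
  assumes x: "x \<in> F2vec g" and e: "e \<in> Fun (F2vec g) d"
  shows "fst (mono_act g (s, x, u) e) = s ^ d * of_int (chi g (sh g x e) u)"
proof -
  have "fst (mono_act g (s, x, u) e) = (\<Prod>t\<in>F2vec g. (s * (-1) ^ vdot (vadd x t) u) ^ e t)"
    by (simp add: mono_act_def var_coeff_def)
  also have "\<dots> = (\<Prod>t\<in>F2vec g. s ^ e t) * (\<Prod>t\<in>F2vec g. ((-1) ^ vdot (vadd x t) u) ^ e t)"
    by (simp add: power_mult_distrib prod.distrib)
  also have "(\<Prod>t\<in>F2vec g. s ^ e t) = s ^ d"
    using e by (simp add: power_sum[symmetric] Fun_def)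
  also have "(\<Prod>t\<in>F2vec g. ((-1::complex) ^ vdot (vadd x t) u) ^ e t)
      = (\<Prod>t\<in>F2vec g. ((-1) ^ vdot (vadd x (vadd x t)) u) ^ e (vadd x t))"
    using prod_vadd[OF x, of "\<lambda>t. ((-1::complex) ^ vdot (vadd x t) u) ^ e t"] by simp
  also have "\<dots> = (\<Prod>t\<in>F2vec g. ((-1) ^ vdot t u) ^ e (vadd x t))"
    using x by (intro prod.cong) (auto simp: F2vec_def vadd_cancel)
  also have "\<dots> = of_int (chi g (sh g x e) u)"
    by (simp add: chi_def sh_def)
  finally show ?thesis .
qed

lemma poly_act_formula:
  assumes x: "x \<in> F2vec g" and p: "p \<in> HPoly g d"
  shows "poly_act g d (s, x, u) p f =
     (if f \<in> Fun (F2vec g) d then s ^ d * of_int (chi g f u) * p (sh g x f) else 0)"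
proof (cases "f \<in> Fun (F2vec g) d")
  case True
  have "poly_act g d (s, x, u) p f = (\<Sum>e\<in>Fun (F2vec g) d.
          if e = sh g x f then s ^ d * of_int (chi g (sh g x e) u) * p e else 0)"
    unfolding poly_act_def Mon_eq
  proof (rule sum.cong[OF refl])
    fix e assume e: "e \<in> Fun (F2vec g) d"
    have iff: "(sh g x e = f) = (e = sh g x f)"
      using sh_inv[OF x] e True by (auto simp: Fun_def)
    thus "(if snd (mono_act g (s, x, u) e) = f then fst (mono_act g (s, x, u) e) * p e else 0) =
          (if e = sh g x f then s ^ d * of_int (chi g (sh g x e) u) * p e else 0)"
      unfolding mono_act_snd[OF x] mono_act_fst[OF x e] iff by blast
  qed
  also have "\<dots> = s ^ d * of_int (chi g (sh g x (sh g x f)) u) * p (sh g x f)"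
    using sh_Fun[OF x True] by (simp add: sum.delta[OF Fun_finite[OF finite_F2]])
  also have "\<dots> = s ^ d * of_int (chi g f u) * p (sh g x f)"
    using sh_inv[OF x] True by (simp add: Fun_def)
  finally show ?thesis using True by simp
next
  case False
  have "poly_act g d (s, x, u) p f = 0"
    unfolding poly_act_def Mon_eq
    by (rule sum.neutral) (use False sh_Fun[OF x] mono_act_snd[OF x] in auto)
  thus ?thesis using False by simp
qed

definition Aset :: "nat \<Rightarrow> nat \<Rightarrow> (bool list \<Rightarrow> nat) set" where
  "Aset g d = {f \<in> Fun (F2vec g) d. \<forall>u\<in>F2vec g. chi g f u = 1}"

definition Iset :: "nat \<Rightarrow> nat \<Rightarrow> ((bool list \<Rightarrow> nat) \<Rightarrow> complex) set" where
  "Iset g d = {p. (\<forall>f. f \<notin> Aset g d \<longrightarrow> p f = 0) \<and>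
     (\<forall>x\<in>F2vec g. \<forall>f\<in>Fun (F2vec g) d. p (sh g x f) = p f)}"

lemma zv_F2[simp]: "zv g \<in> F2vec g"
  by (simp add: F2vec_def)

lemma Invariants_eq:
  assumes d: "d = 4 * n"
  shows "Invariants g d = Iset g d"
proof (intro equalityI subsetI)
  fix p assume "p \<in> Invariants g d"
  hence p: "p \<in> HPoly g d" and inv: "\<And>h. h \<in> Heis g \<Longrightarrow> poly_act g d h p = p"
    by (auto simp: Invariants_def)
  have one: "(1::complex) \<in> mu4" by (simp add: mu4_def)
  have A: "p f = 0" if f: "f \<notin> Aset g d" for f
  proof (cases "f \<in> Fun (F2vec g) d")
    case False then show ?thesis using p by (auto simp: HPoly_def Mon_eq)
  next
    case True
    then obtain u where u: "u \<in> F2vec g" and c: "chi g f u \<noteq> 1" using f by (auto simp: Aset_def)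
    hence c': "chi g f u = -1" using chi_pm by blast
    have "(1, zv g, u) \<in> Heis g" using one u by (simp add: Heis_def)
    hence "poly_act g d (1, zv g, u) p f = p f" using inv by simp
    hence "- p (sh g (zv g) f) = p f"
      using poly_act_formula[OF zv_F2 p] True c' by simp
    moreover have "sh g (zv g) f = f" using sh_zero True by (simp add: Fun_def)
    ultimately show ?thesis by simp
  qed
  have B: "p (sh g x f) = p f" if x: "x \<in> F2vec g" and f: "f \<in> Fun (F2vec g) d" for x f
  proof -
    have "(1, x, zv g) \<in> Heis g" using one x by (simp add: Heis_def)
    hence "poly_act g d (1, x, zv g) p f = p f" using inv by simp
    thus ?thesis using poly_act_formula[OF x p] f by (simp add: chi_def)
  qed
  show "p \<in> Iset g d" using A B by (simp add: Iset_def)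
next
  fix p assume p: "p \<in> Iset g d"
  have hp: "p \<in> HPoly g d" using p by (auto simp: Iset_def HPoly_def Mon_eq Aset_def)
  have "poly_act g d h p = p" if h: "h \<in> Heis g" for h
  proof
    fix f
    obtain s x u where hh: "h = (s, x, u)" and s: "s ^ 4 = 1" and x: "x \<in> F2vec g" and u: "u \<in> F2vec g"
      using h by (auto simp: Heis_def mu4_def)
    have sd: "s ^ d = 1" using s d by (simp add: power_mult)
    show "poly_act g d h p f = p f"
    proof (cases "f \<in> Fun (F2vec g) d")
      case False then show ?thesis using hp poly_act_formula[OF x hp] hh
        by (auto simp: HPoly_def Mon_eq)
    next
      case True
      have eq: "p (sh g x f) = p f" using p x True by (auto simp: Iset_def)
      show ?thesis
      proof (cases "f \<in> Aset g d")
        case True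
        then show ?thesis using poly_act_formula[OF x hp] hh sd eq u by (auto simp: Aset_def)
      next
        case False
        then have "p f = 0" using p by (auto simp: Iset_def)
        then show ?thesis using poly_act_formula[OF x hp] hh eq by auto
      qed
    qed
  qed
  thus "p \<in> Invariants g d" using hp by (simp add: Invariants_def)
qed


lemma sum_fun_apply: "(\<Sum>v\<in>t. (F v :: 'x \<Rightarrow> 'y::comm_monoid_add)) x = (\<Sum>v\<in>t. F v x)"
  by (induction t rule: infinite_finite_induct) auto

definition orb :: "nat \<Rightarrow> (bool list \<Rightarrow> nat) \<Rightarrow> (bool list \<Rightarrow> nat) set" where
  "orb g f = (\<lambda>x. sh g x f) ` F2vec g"

definition ind :: "'a set \<Rightarrow> 'a \<Rightarrow> complex" where
  "ind Q = (\<lambda>f. if f \<in> Q then 1 else 0)"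

lemma inj_ind: "inj ind"
  by (rule injI) (auto simp: ind_def fun_eq_iff split: if_splits)

lemma Aset_sh:
  assumes "even d" "x \<in> F2vec g" "f \<in> Aset g d"
  shows "sh g x f \<in> Aset g d"
  using assms sh_Fun chi_sh by (auto simp: Aset_def power_mult[symmetric] mult.commute[of _ d])

lemma finite_Aset: "finite (Aset g d)"
  by (rule finite_subset[OF _ Fun_finite[OF finite_F2]]) (auto simp: Aset_def)

lemma orb_sub: "even d \<Longrightarrow> f \<in> Aset g d \<Longrightarrow> orb g f \<subseteq> Aset g d"
  using Aset_sh by (auto simp: orb_def)

lemma orb_self: "f \<in> Fun (F2vec g) d \<Longrightarrow> f \<in> orb g f"
  unfolding orb_def using sh_zero[of g f] by (auto simp: Fun_def intro!: image_eqI[of _ _ "zv g"])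

lemma orb_eq:
  assumes f: "f \<in> Fun (F2vec g) d" and h: "h \<in> orb g f"
  shows "orb g h = orb g f"
proof -
  obtain y where y: "y \<in> F2vec g" and hy: "h = sh g y f" using h by (auto simp: orb_def)
  have "orb g h = (\<lambda>x. sh g (vadd y x) f) ` F2vec g"
    unfolding orb_def hy using y by (auto simp: sh_sh)
  also have "\<dots> = (\<lambda>x. sh g x f) ` (vadd y ` F2vec g)" by (simp add: image_image)
  also have "vadd y ` F2vec g = F2vec g" using bij_vadd[OF y] by (simp add: bij_betw_def)
  finally show ?thesis by (simp add: orb_def)
qed

lemma mem_orb_iff:
  assumes "f \<in> Fun (F2vec g) d" "f' \<in> Fun (F2vec g) d"
  shows "f \<in> orb g f' \<longleftrightarrow> orb g f' = orb g f"
  using assms orb_eq orb_self by metis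

lemma Iset_const:
  assumes p: "p \<in> Iset g d" and f: "f \<in> Fun (F2vec g) d" and h: "h \<in> orb g f"
  shows "p h = p f"
  using assms by (auto simp: orb_def Iset_def)

interpretation vs: vector_space "fscale :: complex \<Rightarrow> ((bool list \<Rightarrow> nat) \<Rightarrow> complex) \<Rightarrow> _"
  by (rule fscale_vector_space)

lemma subspace_Iset: "vs.subspace (Iset g d)"
  by (rule vs.subspaceI) (auto simp: Iset_def fscale_def)

lemma dim_Iset:
  assumes d: "even d"
  shows "cdim (Iset g d) = card (orb g ` Aset g d)"
proof -
  let ?O = "orb g ` Aset g d"
  let ?B = "ind ` ?O"
  have finO: "finite ?O" using finite_Aset by simp
  have finB: "finite ?B" using finO by simp
  have AF: "\<And>f. f \<in> Aset g d \<Longrightarrow> f \<in> Fun (F2vec g) d" by (simp add: Aset_def)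
  have indval: "ind Q f = (if Q = orb g f then 1 else 0)" if "Q \<in> ?O" "f \<in> Aset g d" for Q f
    using that mem_orb_iff[OF AF AF] by (auto simp: ind_def)
  have B_sub: "?B \<subseteq> Iset g d"
  proof
    fix v assume "v \<in> ?B"
    then obtain f where f: "f \<in> Aset g d" and v: "v = ind (orb g f)" by auto
    have "\<forall>h. h \<notin> Aset g d \<longrightarrow> v h = 0" using orb_sub[OF d f] by (auto simp: v ind_def)
    moreover have "v (sh g x h) = v h" if "x \<in> F2vec g" "h \<in> Fun (F2vec g) d" for x h
    proof -
      have "sh g x h \<in> orb g h" using that by (auto simp: orb_def)
      hence "orb g (sh g x h) = orb g h" using orb_eq that by blast
      moreover have "sh g x h \<in> Fun (F2vec g) d" using sh_Fun that by blast
      ultimately show ?thesis using that AF f mem_orb_iff[of _ g d f] by (simp add: v ind_def)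
    qed
    ultimately show "v \<in> Iset g d" by (simp add: Iset_def)
  qed
  have span: "vs.span ?B = vs.span (Iset g d)"
  proof -
    have "vs.span (Iset g d) = Iset g d" using subspace_Iset by simp
    moreover have "Iset g d \<subseteq> vs.span ?B"
    proof
      fix p assume p: "p \<in> Iset g d"
      define c where "c v = p (SOME f. v f = (1::complex))" for v
      have "p = (\<Sum>v\<in>?B. fscale (c v) v)"
      proof
        fix f
        have "(\<Sum>v\<in>?B. fscale (c v) v) f = (\<Sum>v\<in>?B. c v * v f)"
          by (simp add: sum_fun_apply fscale_def)
        also have "\<dots> = (\<Sum>Q\<in>?O. c (ind Q) * ind Q f)"
          using sum.reindex[OF inj_on_subset[OF inj_ind subset_UNIV], of "\<lambda>v. c v * v f" ?O] by simp
        also have "\<dots> = p f"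
        proof (cases "f \<in> Aset g d")
          case True
          have "(\<Sum>Q\<in>?O. c (ind Q) * ind Q f) = (\<Sum>Q\<in>?O. if Q = orb g f then c (ind Q) else 0)"
            using indval True by (intro sum.cong) auto
          also have "\<dots> = c (ind (orb g f))" using True finO by (simp add: sum.delta')
          also have "\<dots> = p f"
          proof -
            have ex: "\<exists>h. ind (orb g f) h = 1" using orb_self[OF AF[OF True]] by (auto simp: ind_def)
            have "ind (orb g f) (SOME h. ind (orb g f) h = 1) = 1" using someI_ex[OF ex] .
            hence "(SOME h. ind (orb g f) h = 1) \<in> orb g f" by (auto simp: ind_def split: if_splits)
            thus ?thesis using Iset_const[OF p AF[OF True]] by (simp add: c_def)
          qed
          finally show ?thesis .
        next
          case False
          have "f \<notin> Q" if "Q \<in> ?O" for Q using that orb_sub[OF d] False by auto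
          hence "(\<Sum>Q\<in>?O. c (ind Q) * ind Q f) = 0" by (intro sum.neutral) (auto simp: ind_def)
          moreover have "p f = 0" using p False by (simp add: Iset_def)
          ultimately show ?thesis by simp
        qed
        finally show "p f = (\<Sum>v\<in>?B. fscale (c v) v) f" by simp
      qed
      thus "p \<in> vs.span ?B" using vs.span_finite[OF finB] by blast
    qed
    moreover have "vs.span ?B \<subseteq> Iset g d" using vs.span_minimal[OF B_sub subspace_Iset] .
    ultimately show ?thesis by blast
  qed
  have indep: "vs.independent ?B"
    unfolding vs.independent_explicit_module
  proof (intro allI impI)
    fix t u v assume t: "finite t" "t \<subseteq> ?B" and s: "(\<Sum>v\<in>t. fscale (u v) v) = 0" and v: "v \<in> t"
    obtain f where f: "f \<in> Aset g d" and vf: "v = ind (orb g f)" using v t by auto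
    have "0 = (\<Sum>w\<in>t. fscale (u w) w) f" using s by simp
    also have "\<dots> = (\<Sum>w\<in>t. u w * w f)" by (simp add: sum_fun_apply fscale_def)
    also have "\<dots> = (\<Sum>w\<in>t. if w = v then u w else 0)"
    proof (rule sum.cong[OF refl])
      fix w assume w: "w \<in> t"
      then obtain f' where f': "f' \<in> Aset g d" and wf: "w = ind (orb g f')" using t by auto
      have "w f = (if orb g f' = orb g f then 1 else 0)"
        using indval[of "orb g f'" f] f f' wf by auto
      moreover have "w = v \<longleftrightarrow> orb g f' = orb g f"
        using inj_ind vf wf by (auto dest: injD)
      ultimately show "u w * w f = (if w = v then u w else 0)" by simp
    qed
    also have "\<dots> = u v" using t v by (simp add: sum.delta')
    finally show "u v = 0" by simp
  qed
  have "cdim (Iset g d) = card ?B"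
    unfolding cdim_def using vs.dim_eq_card[OF span indep] .
  also have "\<dots> = card ?O" using card_image[OF inj_on_subset[OF inj_ind subset_UNIV]] .
  finally show ?thesis .
qed


definition stab :: "nat \<Rightarrow> (bool list \<Rightarrow> nat) \<Rightarrow> bool list set" where
  "stab g f = {x \<in> F2vec g. sh g x f = f}"

lemma orbit_stab:
  assumes f: "f \<in> Fun (F2vec g) d"
  shows "card (stab g f) * card (orb g f) = 2 ^ g"
proof -
  have vz: "\<forall>t. t \<notin> F2vec g \<longrightarrow> f t = 0" using f by (simp add: Fun_def)
  have fib: "card {x \<in> F2vec g. sh g x f = h} = card (stab g f)" if h: "h \<in> orb g f" for h
  proof -
    obtain y where y: "y \<in> F2vec g" and hy: "h = sh g y f" using h by (auto simp: orb_def)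
    have "{x \<in> F2vec g. sh g x f = h} = vadd y ` stab g f"
    proof (intro equalityI subsetI)
      fix x assume x: "x \<in> {x \<in> F2vec g. sh g x f = h}"
      have xF: "x \<in> F2vec g" using x by simp
      have "sh g (vadd x y) f = sh g y (sh g x f)" using sh_sh[OF y xF] by simp
      also have "\<dots> = sh g y (sh g y f)" using hy x by simp
      also have "\<dots> = f" using sh_inv[OF y vz] .
      finally have "sh g (vadd x y) f = f" .
      hence "vadd x y \<in> stab g f" using x y by (simp add: stab_def vadd_F2)
      moreover have "x = vadd y (vadd x y)" using x y
        by (metis (mono_tags, lifting) F2vec_def mem_Collect_eq vadd_cancel vadd_comm)
      ultimately show "x \<in> vadd y ` stab g f" by blast
    next
      fix x assume "x \<in> vadd y ` stab g f"
      then obtain z where z: "z \<in> F2vec g" "sh g z f = f" and xz: "x = vadd y z" by (auto simp: stab_def)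
      have "sh g x f = sh g y (sh g z f)" using sh_sh[OF y z(1)] xz vadd_comm by metis
      thus "x \<in> {x \<in> F2vec g. sh g x f = h}" using z xz y hy by (simp add: vadd_F2)
    qed
    moreover have "inj_on (vadd y) (stab g f)"
      using bij_vadd[OF y] by (auto simp: bij_betw_def stab_def intro: inj_on_subset)
    ultimately show ?thesis by (simp add: card_image)
  qed
  have "2 ^ g = (\<Sum>x\<in>F2vec g. 1::nat)" by (simp add: card_F2)
  also have "\<dots> = (\<Sum>h\<in>orb g f. \<Sum>x\<in>{x \<in> F2vec g. sh g x f = h}. 1)"
    by (rule sum.group[symmetric]) (auto simp: finite_F2 orb_def)
  also have "\<dots> = (\<Sum>h\<in>orb g f. card (stab g f))" using fib by simp
  finally show ?thesis by simp
qed

lemma burnside: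
  assumes d: "even d"
  shows "2 ^ g * card (orb g ` Aset g d) = (\<Sum>x\<in>F2vec g. card {f \<in> Aset g d. sh g x f = f})"
proof -
  let ?A = "Aset g d"
  have AF: "\<And>f. f \<in> ?A \<Longrightarrow> f \<in> Fun (F2vec g) d" by (simp add: Aset_def)
  have "(\<Sum>x\<in>F2vec g. card {f \<in> ?A. sh g x f = f})
      = (\<Sum>x\<in>F2vec g. \<Sum>f\<in>?A. if sh g x f = f then 1 else 0)"
    by (simp add: sum.inter_filter[OF finite_Aset, symmetric])
  also have "\<dots> = (\<Sum>f\<in>?A. \<Sum>x\<in>F2vec g. if sh g x f = f then 1 else 0)"
    by (rule sum.swap)
  also have "\<dots> = (\<Sum>f\<in>?A. card (stab g f))"
    by (simp add: sum.inter_filter[OF finite_F2, symmetric] stab_def)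
  also have "\<dots> = (\<Sum>Q\<in>orb g ` ?A. \<Sum>f\<in>{f\<in>?A. orb g f = Q}. card (stab g f))"
    by (rule sum.group[symmetric]) (auto simp: finite_Aset)
  also have "\<dots> = (\<Sum>Q\<in>orb g ` ?A. 2 ^ g)"
  proof (rule sum.cong[OF refl])
    fix Q assume "Q \<in> orb g ` ?A"
    then obtain f0 where f0: "f0 \<in> ?A" and Q: "Q = orb g f0" by auto
    have QA: "{f\<in>?A. orb g f = Q} = Q"
      using orb_sub[OF d f0] mem_orb_iff[OF AF AF] orb_self[OF AF[OF f0]] Q f0
      by auto
    have cs: "card (stab g f) = 2 ^ g div card Q" if "f \<in> Q" for f
    proof -
      have fA: "f \<in> ?A" using that orb_sub[OF d f0] Q by auto
      have "orb g f = Q" using that Q orb_eq AF[OF f0] by blast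
      hence "card (stab g f) * card Q = 2 ^ g" using orbit_stab[OF AF[OF fA]] by simp
      moreover have "card Q > 0"
        using orb_self[OF AF[OF f0]] Q finite_subset[OF orb_sub[OF d f0] finite_Aset]
        by (auto simp: card_gt_0_iff)
      ultimately show ?thesis by (metis nonzero_mult_div_cancel_right not_gr0)
    qed
    have dv: "card Q dvd 2 ^ g"
      using orbit_stab[OF AF[OF f0]] Q by (metis dvd_triv_right)
    have "(\<Sum>f\<in>{f\<in>?A. orb g f = Q}. card (stab g f)) = (\<Sum>f\<in>Q. 2 ^ g div card Q)"
      unfolding QA using cs by simp
    also have "\<dots> = 2 ^ g" using dv by simp
    finally show "(\<Sum>f\<in>{f\<in>?A. orb g f = Q}. card (stab g f)) = 2 ^ g" .
  qed
  also have "\<dots> = 2 ^ g * card (orb g ` ?A)" by simp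
  finally show ?thesis by simp
qed

lemma chi_orth:
  "(\<Sum>u\<in>F2vec g. chi g f u) = (if \<forall>u\<in>F2vec g. chi g f u = 1 then 2 ^ g else 0)"
proof (cases "\<forall>u\<in>F2vec g. chi g f u = 1")
  case True
  then show ?thesis by (simp add: card_F2)
next
  case False
  then obtain u0 where u0: "u0 \<in> F2vec g" "chi g f u0 = -1" using chi_pm by blast
  have "(\<Sum>u\<in>F2vec g. chi g f u) = (\<Sum>u\<in>F2vec g. chi g f (vadd u0 u))"
    using sum_vadd[OF u0(1), of "chi g f"] by simp
  also have "\<dots> = (\<Sum>u\<in>F2vec g. - chi g f u)"
    using u0 by (intro sum.cong) (auto simp: chi_hom)
  finally have "(\<Sum>u\<in>F2vec g. chi g f u) = 0" by (simp add: sum_negf)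
  thus ?thesis using False by simp
qed

lemma fix_count:
  "2 ^ g * int (card {f \<in> Aset g d. sh g x f = f})
    = (\<Sum>u\<in>F2vec g. \<Sum>f\<in>{f \<in> Fun (F2vec g) d. sh g x f = f}. chi g f u)"
proof -
  let ?X = "{f \<in> Fun (F2vec g) d. sh g x f = f}"
  have finX: "finite ?X" using Fun_finite[OF finite_F2] by simp
  have "(\<Sum>u\<in>F2vec g. \<Sum>f\<in>?X. chi g f u) = (\<Sum>f\<in>?X. \<Sum>u\<in>F2vec g. chi g f u)"
    by (rule sum.swap)
  also have "\<dots> = (\<Sum>f\<in>?X. if f \<in> Aset g d then 2 ^ g else 0)"
    by (intro sum.cong) (auto simp: chi_orth Aset_def)
  also have "\<dots> = (\<Sum>f\<in>{f\<in>?X. f \<in> Aset g d}. 2 ^ g)"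
    by (rule sum.inter_filter[OF finX, symmetric])
  also have "{f\<in>?X. f \<in> Aset g d} = {f \<in> Aset g d. sh g x f = f}"
    by (auto simp: Aset_def)
  finally show ?thesis by simp
qed


definition T :: "nat \<Rightarrow> nat \<Rightarrow> bool list \<Rightarrow> bool list \<Rightarrow> int" where
  "T g d x u = (\<Sum>f\<in>{f \<in> Fun (F2vec g) d. sh g x f = f}. chi g f u)"

lemma card_Fun:
  assumes "finite V" "card V \<ge> 1"
  shows "int (card (Fun V k)) = int ((card V + k - 1) choose k)"
proof -
  have "int (card (Fun V k)) = (\<Sum>f\<in>Fun V k. \<Prod>v\<in>V. (1::int) ^ f v)" by simp
  also have "\<dots> = (\<Prod>v\<in>V. geo (1::int)) $ k" by (rule GF[OF assms(1)])
  also have "\<dots> = (geo 1 ^ card V) $ k" by simp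
  also have "\<dots> = int ((card V + k - 1) choose k)" using geo1_pow[OF assms(2)] by simp
  finally show ?thesis .
qed

lemma T00:
  "T g d (zv g) (zv g) = int ((2 ^ g + d - 1) choose d)"
proof -
  have "{f \<in> Fun (F2vec g) d. sh g (zv g) f = f} = Fun (F2vec g) d"
    using sh_zero by (auto simp: Fun_def)
  hence "T g d (zv g) (zv g) = int (card (Fun (F2vec g) d))"
    by (simp add: T_def chi_zero)
  also have "\<dots> = int ((2 ^ g + d - 1) choose d)"
    using card_Fun[OF finite_F2, of g d] by (simp add: card_F2)
  finally show ?thesis .
qed

lemma T0u:
  assumes g: "g \<ge> 1" and u: "u \<in> F2vec g" "u \<noteq> zv g"
  shows "T g (4 * n) (zv g) u = int ((2 ^ (g - 1) + 2 * n - 1) choose (2 * n))"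
proof -
  let ?F = "F2vec g"
  let ?E = "{t\<in>?F. even (vdot t u)}" and ?O = "{t\<in>?F. odd (vdot t u)}"
  obtain y where y: "length y = g" "odd (vdot u y)" using exists_odd u by (auto simp: F2vec_def)
  have yF: "y \<in> ?F" and oy: "odd (vdot y u)" using y by (auto simp: F2vec_def vdot_comm)
  have cE: "card ?E = 2 ^ (g - 1)" and cO: "card ?O = 2 ^ (g - 1)"
    using half_card[OF u(1) yF oy g] by auto
  have m1: "(2::nat) ^ (g - 1) \<ge> 1" by simp
  have "{f \<in> Fun ?F (4 * n). sh g (zv g) f = f} = Fun ?F (4 * n)"
    using sh_zero by (auto simp: Fun_def)
  hence "T g (4 * n) (zv g) u = (\<Sum>f\<in>Fun ?F (4 * n). \<Prod>t\<in>?F. ((-1::int) ^ vdot t u) ^ f t)"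
    by (simp add: T_def chi_def)
  also have "\<dots> = (\<Prod>t\<in>?F. geo ((-1::int) ^ vdot t u)) $ (4 * n)"
    by (rule GF[OF finite_F2])
  also have "(\<Prod>t\<in>?F. geo ((-1::int) ^ vdot t u)) =
      (\<Prod>t\<in>?E. geo ((-1::int) ^ vdot t u)) * (\<Prod>t\<in>?O. geo ((-1::int) ^ vdot t u))"
  proof -
    have e: "?F = ?E \<union> ?O" by auto
    have "(\<Prod>t\<in>?E \<union> ?O. geo ((-1::int) ^ vdot t u)) =
      (\<Prod>t\<in>?E. geo ((-1::int) ^ vdot t u)) * (\<Prod>t\<in>?O. geo ((-1::int) ^ vdot t u))"
      by (rule prod.union_disjoint) (use finite_F2[of g] in auto)
    thus ?thesis using e by simp
  qed
  also have "(\<Prod>t\<in>?E. geo ((-1::int) ^ vdot t u)) = (\<Prod>t\<in>?E. geo 1)"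
    by (intro prod.cong) auto
  also have "\<dots> = geo 1 ^ 2 ^ (g - 1)"
    using cE by simp
  also have "(\<Prod>t\<in>?O. geo ((-1::int) ^ vdot t u)) = (\<Prod>t\<in>?O. geo (-1))"
    by (intro prod.cong) auto
  also have "\<dots> = geo (-1) ^ 2 ^ (g - 1)"
    using cO by simp
  also have "geo (1::int) ^ 2 ^ (g - 1) * geo (-1) ^ 2 ^ (g - 1) = (geo 1 * geo (-1)) ^ 2 ^ (g - 1)"
    by (simp add: power_mult_distrib)
  also have "((geo (1::int) * geo (-1)) ^ 2 ^ (g - 1)) $ (4 * n) = int ((2 ^ (g - 1) + 2 * n - 1) choose (2 * n))"
    using EP[OF m1, of "2 * n"] by (simp add: mult.assoc[symmetric])
  finally show ?thesis .
qed


lemma chi_add: "chi g (\<lambda>t. a t + b t) u = chi g a u * chi g b u"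
  by (simp add: chi_def power_add prod.distrib)

lemma chi_sq: "chi g f u * chi g f u = 1"
  using chi_pm[of g f u] by auto

lemma Tx:
  assumes g: "g \<ge> 1" and x: "x \<in> F2vec g" "x \<noteq> zv g" and u: "u \<in> F2vec g"
  shows "T g (4 * n) x u = int ((2 ^ (g - 1) + 2 * n - 1) choose (2 * n))"
proof -
  let ?F = "F2vec g"
  obtain u' where u': "length u' = g" "odd (vdot x u')" using exists_odd x by (auto simp: F2vec_def)
  have u'F: "u' \<in> ?F" using u' by (simp add: F2vec_def)
  define R where "R = {t\<in>?F. even (vdot t u')}"
  have cR: "card R = 2 ^ (g - 1)" using half_card(1)[OF u'F x(1) u'(2) g] by (simp add: R_def)
  have RF: "R \<subseteq> ?F" by (auto simp: R_def)
  have finR: "finite R" using finite_subset[OF RF finite_F2] .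
  have xlen: "length x = g" using x by (simp add: F2vec_def)
  have flip: "vadd x t \<in> R \<longleftrightarrow> t \<notin> R" if t: "t \<in> ?F" for t
    using t u' xlen by (auto simp: R_def F2vec_def even_vdot_vadd)
  have xxt: "vadd x (vadd x t) = t" if "t \<in> ?F" for t using that xlen by (simp add: F2vec_def vadd_cancel)
  define \<psi> where "\<psi> c = (\<lambda>t. c t + sh g x c t)" for c :: "bool list \<Rightarrow> nat"
  define rst where "rst f = (\<lambda>t. if t \<in> R then f t else 0)" for f :: "bool list \<Rightarrow> nat"
  let ?X = "{f \<in> Fun ?F (4 * n). sh g x f = f}"
  have cF: "c \<in> Fun ?F k" if "c \<in> Fun R k" for c k
  proof -
    have "sum c ?F = sum c R"
      using that RF by (intro sum.mono_neutral_right[OF finite_F2]) (auto simp: Fun_def)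
    thus ?thesis using that RF by (auto simp: Fun_def)
  qed
  have shsum: "sum (sh g x c) ?F = sum c ?F" for c
    using sum_vadd[OF x(1), of c] by (simp add: sh_def)
  have psiX: "\<psi> c \<in> ?X" if c: "c \<in> Fun R (2 * n)" for c
  proof -
    have cf: "c \<in> Fun ?F (2 * n)" using cF[OF c] .
    have s1: "sum (\<psi> c) ?F = 4 * n"
      using cf shsum[of c] by (simp add: \<psi>_def sum.distrib Fun_def)
    have cz: "\<forall>t. t \<notin> ?F \<longrightarrow> c t = 0" using cf unfolding Fun_def by blast
    have v1: "\<forall>t. t \<notin> ?F \<longrightarrow> \<psi> c t = 0" unfolding \<psi>_def sh_def using cz by auto
    have "sh g x (\<psi> c) = \<psi> c"
    proof
      fix t show "sh g x (\<psi> c) t = \<psi> c t"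
        using xxt[of t] vadd_F2[OF x(1), of t] by (auto simp: \<psi>_def sh_def cz)
    qed
    thus ?thesis using s1 v1 by (simp add: Fun_def)
  qed
  have rst_psi: "rst (\<psi> c) = c" if c: "c \<in> Fun R (2 * n)" for c
  proof
    fix t show "rst (\<psi> c) t = c t"
    proof (cases "t \<in> R")
      case True
      then have "vadd x t \<notin> R" using flip RF by auto
      then show ?thesis using True c RF by (auto simp: rst_def \<psi>_def sh_def Fun_def)
    next
      case False then show ?thesis using c by (simp add: rst_def Fun_def)
    qed
  qed
  have psi_rst: "\<psi> (rst f) = f" if f: "f \<in> ?X" for f
  proof
    fix t
    have fz: "f t = 0" if "t \<notin> ?F" for t using f that by (auto simp: Fun_def)
    have fs: "f (vadd x t) = f t" if "t \<in> ?F" for t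
    proof -
      have "sh g x f t = f t" using f by simp
      thus ?thesis using that by (simp add: sh_def)
    qed
    show "\<psi> (rst f) t = f t"
    proof (cases "t \<in> ?F")
      case True
      then show ?thesis using flip[OF True] fs[OF True] by (auto simp: \<psi>_def rst_def sh_def)
    next
      case False
      then show ?thesis using RF fz by (auto simp: \<psi>_def rst_def sh_def)
    qed
  qed
  have rstR: "rst f \<in> Fun R (2 * n)" if f: "f \<in> ?X" for f
  proof -
    have "4 * n = sum f ?F" using f by (simp add: Fun_def)
    also have "\<dots> = sum (\<psi> (rst f)) ?F" using psi_rst[OF f] by simp
    also have "\<dots> = 2 * sum (rst f) ?F" using shsum[of "rst f"] by (simp add: \<psi>_def sum.distrib)
    also have "sum (rst f) ?F = sum (rst f) R"
      using RF by (intro sum.mono_neutral_right[OF finite_F2]) (auto simp: rst_def)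
    finally have "sum (rst f) R = 2 * n" by simp
    thus ?thesis by (simp add: Fun_def rst_def)
  qed
  have bij: "bij_betw \<psi> (Fun R (2 * n)) ?X"
    by (rule bij_betw_byWitness[where f'=rst]) (use psiX rst_psi psi_rst rstR in auto)
  have chi1: "chi g f u = 1" if f: "f \<in> ?X" for f
  proof -
    have rf: "rst f \<in> Fun ?F (2 * n)" using cF[OF rstR[OF f]] .
    have "chi g f u = chi g (\<psi> (rst f)) u" using psi_rst[OF f] by simp
    also have "\<dots> = chi g (rst f) u * (((-1) ^ vdot x u) ^ (2 * n) * chi g (rst f) u)"
      unfolding \<psi>_def chi_add chi_sh[OF x(1) u rf] ..
    also have "\<dots> = ((-1) ^ vdot x u) ^ (2 * n) * (chi g (rst f) u * chi g (rst f) u)"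
      by (simp add: algebra_simps)
    also have "\<dots> = 1" by (simp add: chi_sq power_mult[symmetric] mult.commute[of _ 2] power_mult)
    finally show ?thesis .
  qed
  have "T g (4 * n) x u = int (card ?X)"
    unfolding T_def using chi1 by simp
  also have "card ?X = card (Fun R (2 * n))" using bij_betw_same_card[OF bij] by simp
  also have "int \<dots> = int ((2 ^ (g - 1) + 2 * n - 1) choose (2 * n))"
    using card_Fun[OF finR, of "2 * n"] cR by simp
  finally show ?thesis .
qed


theorem mainTheorem1:
  fixes g n :: nat
  assumes "g \<ge> 1" and "n \<ge> 1"
  shows "real (cdim (Invariants g (4 * n))) =
    (1 / 2 ^ (2 * g)) * (real ((2 ^ g + 4 * n - 1) choose (4 * n))
      + (2 ^ (2 * g) - 1) * real ((2 ^ (g - 1) + 2 * n - 1) choose (2 * n)))"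
proof -
  let ?F = "F2vec g"
  let ?N = "card (orb g ` Aset g (4 * n))"
  let ?B = "(2 ^ g + 4 * n - 1) choose (4 * n)"
  let ?C = "(2 ^ (g - 1) + 2 * n - 1) choose (2 * n)"
  have ev: "even (4 * n)" by simp
  have dimN: "cdim (Invariants g (4 * n)) = ?N"
    using Invariants_eq[of "4 * n" n g] dim_Iset[OF ev] by simp
  have "int (2 ^ g * (2 ^ g * ?N)) = (\<Sum>x\<in>?F. 2 ^ g * int (card {f \<in> Aset g (4 * n). sh g x f = f}))"
    using burnside[OF ev, of g] by (simp add: sum_distrib_left)
  also have "\<dots> = (\<Sum>x\<in>?F. \<Sum>u\<in>?F. T g (4 * n) x u)"
    by (simp add: fix_count T_def)
  also have "\<dots> = (\<Sum>p\<in>?F \<times> ?F. T g (4 * n) (fst p) (snd p))"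
    by (simp add: sum.cartesian_product case_prod_beta)
  also have "\<dots> = T g (4 * n) (zv g) (zv g) + (\<Sum>p\<in>?F \<times> ?F - {(zv g, zv g)}. T g (4 * n) (fst p) (snd p))"
    using sum.remove[of "?F \<times> ?F" "(zv g, zv g)" "\<lambda>p. T g (4 * n) (fst p) (snd p)"] finite_F2[of g]
    by simp
  also have "(\<Sum>p\<in>?F \<times> ?F - {(zv g, zv g)}. T g (4 * n) (fst p) (snd p)) = (\<Sum>p\<in>?F \<times> ?F - {(zv g, zv g)}. int ?C)"
  proof (rule sum.cong[OF refl])
    fix p assume p: "p \<in> ?F \<times> ?F - {(zv g, zv g)}"
    obtain x u where pxu: "p = (x, u)" by (cases p)
    show "T g (4 * n) (fst p) (snd p) = int ?C"
    proof (cases "x = zv g")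
      case True
      then have "u \<noteq> zv g" using p pxu by auto
      then show ?thesis using T0u[OF assms(1)] p pxu True by auto
    next
      case False
      then show ?thesis using Tx[OF assms(1)] p pxu by auto
    qed
  qed
  also have "\<dots> = int (card (?F \<times> ?F) - 1) * int ?C"
    by (simp add: card_Diff_singleton finite_F2)
  also have "card (?F \<times> ?F) = 2 ^ (2 * g)"
    by (simp add: card_cartesian_product card_F2 power_add[symmetric] mult_2)
  finally have key: "int (2 ^ g * (2 ^ g * ?N)) = int ?B + int (2 ^ (2 * g) - 1) * int ?C"
    by (simp add: T00)
  have pos: "(1::nat) \<le> 2 ^ (2 * g)" by simp
  have "real (2 ^ g * (2 ^ g * ?N)) = real ?B + real (2 ^ (2 * g) - 1) * real ?C"
    using arg_cong[OF key, of "real_of_int"] by simp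
  hence "2 ^ (2 * g) * real ?N = real ?B + (2 ^ (2 * g) - 1) * real ?C"
    using pos by (simp add: of_nat_diff power_add mult_2 mult.assoc[symmetric])
  thus ?thesis unfolding dimN by (simp add: field_simps)
qed


end
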